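(* Let $\mathcal{G}=(\mathcal{V},\mathcal{E},\mathbf{X})$ be an attributed graph with nodes $\mathcal{V}=\{v_1,\dots,v_n\}$ and node feature vectors $\mathbf{x}_{v}\in\mathbb{R}^d$ (row vectors), and suppose each node $v_i$ has a sensitive value $s_i\in\mathcal{A}=\{a_1,\dots,a_\zeta\}$. For $a\in\mathcal{A}$ let $\mathcal{V}_a=\{v_j: s_j=a\}$ and $\mathcal{V}_{\neq a}=\mathcal{V}\setminus\mathcal{V}_a$, both assumed nonempty. Let $\tilde{\mathbf{A}}\in\mathbb{R}^{n\times n}$ be the random walk probability matrix, where $\tilde{\mathbf{A}}[i,j]$ is the probability that a $K$-step random walk starting at $v_i$ terminates at $v_j$ (so each row of $\tilde{\mathbf{A}}$ is a probability distribution). Define $$\beta[a,a]=\frac{1}{|\mathcal{V}_a|}\sum_{v_i\in\mathcal{V}_a,\,v_j\in\mathcal{V}_a}\tilde{\mathbf{A}}[i,j],\qquad \beta[\neq a,a]=\frac{1}{|\mathcal{V}_{\neq a}|}\sum_{v_i\in\mathcal{V}_{\neq a},\,v_j\in\mathcal{V}_a}\tilde{\mathbf{A}}[i,j].$$ Let $\mu_a=\frac{1}{|\mathcal{V}_a|}\sum_{v\in\mathcal{V}_a}\mathbf{x}_v$, $\mu_{\neq a}=\frac{1}{|\mathcal{V}_{\neq a}|}\sum_{v\in\mathcal{V}_{\neq a}}\mathbf{x}_v$, $dev(\mathcal{V}_a)=\max_{v\in\mathcal{V}_a}\|\mathbf{x}_v-\mu_a\|_\infty$, $dev(\mathcal{V}_{\neq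 a})=\max_{v\in\mathcal{V}_{\neq a}}\|\mathbf{x}_v-\mu_{\neq a}\|_\infty$, and $\delta_a=\max\{dev(\mathcal{V}_a),dev(\mathcal{V}_{\neq a})\}$. Consider a $K$-layer simple GCN (SGCN) with parameter matrix $\mathbf{W}$, i.e. the model whose logit at node $v$ is $\mathbf{p}_v=\mathbf{h}_v\mathbf{W}$ with $\mathbf{h}_v=\sum_{u\in\mathcal{V}}\tilde{\mathbf{A}}[v,u]\,\mathbf{x}_u$, and let $$\hat{\mathcal{L}}_{\text{dp}}=\sum_{a\in\mathcal{A}}\left\|\frac{\sum_{v_i\in\mathcal{V}_a}\mathbf{p}_{v_i}}{|\mathcal{V}_a|}-\frac{\sum_{v_j\in\mathcal{V}_{\neq a}}\mathbf{p}_{v_j}}{|\mathcal{V}_{\neq a}|}\right\|_2 .$$ Then, for any such SGCN with parameters $\mathbf{W}$, $$\hat{\mathcal{L}}_{\text{dp}}\le\sum_{a\in\mathcal{A}}\|\mathbf{W}\|_2\left(|\beta[a,a]-\beta[\neq a,a]|\cdot\|\mu_a-\mu_{\neq a}\|_2+2\sqrt{d}\sum_{a'\in\mathcal{A}}\delta_{a'}\right),$$ where $\|\mathbf{W}\|_2$ is the spectral norm of $\mathbf{W}$.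
   Context: A simple GCN (SGCN) is a graph convolutional network without nonlinear activations between layers, so that its $K$-layer node representation is the $K$-step propagated feature $\mathbf{h}_v=\sum_{u}\tilde{\mathbf{A}}[v,u]\mathbf{x}_u$ and its prediction is $\sigma(\mathbf{h}_v\mathbf{W})$ with $\sigma$ the softmax; the vector $\mathbf{p}_v=\mathbf{h}_v\mathbf{W}$ (input to the softmax) is called the logit. $d$ is the dimension of the node feature vectors. *)

theory Defs
  imports "HOL-Analysis.Analysis"
begin

(* K-th power of a square matrix , giving the K-step transition matrix *)
primrec mat_pow :: "real^'n^'n \<Rightarrow> nat \<Rightarrow> real^'n^'n" where
  "mat_pow P 0 = mat 1"
| "mat_pow P (Suc k) = mat_pow P k ** P"

definition random_walk_transition :: "('n::finite \<Rightarrow> 'n \<Rightarrow> bool) \<Rightarrow> real^'n^'n \<Rightarrow> bool" where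
  "random_walk_transition E P \<longleftrightarrow>
     (\<forall>i j. 0 \<le> P$i$j) \<and> (\<forall>i. (\<Sum>j\<in>UNIV. P$i$j) = 1) \<and> (\<forall>i j. P$i$j \<noteq> 0 \<longrightarrow> E i j)"

definition linf_norm :: "real^'d \<Rightarrow> real" where
  "linf_norm y = Max (range (\<lambda>i. \<bar>y$i\<bar>))"

definition mean_feat :: "('n \<Rightarrow> real^'d) \<Rightarrow> 'n set \<Rightarrow> real^'d" where
  "mean_feat x S = (1 / real (card S)) *\<^sub>R (\<Sum>v\<in>S. x v)"

definition dev :: "('n \<Rightarrow> real^'d) \<Rightarrow> 'n set \<Rightarrow> real" where
  "dev x S = Max ((\<lambda>v. linf_norm (x v - mean_feat x S)) ` S)"

definition grp :: "('n \<Rightarrow> 'a) \<Rightarrow> 'a \<Rightarrow> 'n set" where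
  "grp s a = {v. s v = a}"

definition grp_not :: "('n \<Rightarrow> 'a) \<Rightarrow> 'a \<Rightarrow> 'n set" where
  "grp_not s a = {v. s v \<noteq> a}"

definition beta :: "real^'n^'n \<Rightarrow> 'n set \<Rightarrow> 'n set \<Rightarrow> real" where
  "beta At S T = (1 / real (card S)) * (\<Sum>i\<in>S. \<Sum>j\<in>T. At$i$j)"

definition delta :: "('n \<Rightarrow> real^'d) \<Rightarrow> ('n \<Rightarrow> 'a) \<Rightarrow> 'a \<Rightarrow> real" where
  "delta x s a = max (dev x (grp s a)) (dev x (grp_not s a))"

definition sgcn_hidden :: "real^'n^'n \<Rightarrow> ('n \<Rightarrow> real^'d) \<Rightarrow> 'n \<Rightarrow> real^'d" where
  "sgcn_hidden At x v = (\<Sum>u\<in>UNIV. (At$v$u) *\<^sub>R x u)"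

definition sgcn_logit :: "real^'n^'n \<Rightarrow> ('n \<Rightarrow> real^'d) \<Rightarrow> real^'c^'d \<Rightarrow> 'n \<Rightarrow> real^'c" where
  "sgcn_logit At x W v = sgcn_hidden At x v v* W"

definition spectral_norm :: "real^'c^'d \<Rightarrow> real" where
  "spectral_norm W = onorm (\<lambda>y. y v* W)"

definition L_dp :: "real^'n^'n \<Rightarrow> ('n \<Rightarrow> real^'d) \<Rightarrow> real^'c^'d \<Rightarrow> ('n \<Rightarrow> 'a) \<Rightarrow> 'a set \<Rightarrow> real" where
  "L_dp At x W s A = (\<Sum>a\<in>A.
      norm ((1 / real (card (grp s a))) *\<^sub>R (\<Sum>v\<in>grp s a. sgcn_logit At x W v)
          - (1 / real (card (grp_not s a))) *\<^sub>R (\<Sum>v\<in>grp_not s a. sgcn_logit At x W v)))"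

end

theory Submission
  imports Defs
begin

lemma stoch_pow:
  assumes P: "random_walk_transition E P"
  shows "(\<forall>i j. 0 \<le> mat_pow P K $ i $ j) \<and> (\<forall>i. (\<Sum>j\<in>UNIV. mat_pow P K $ i $ j) = 1)"
proof (induction K)
  case 0
  then show ?case by (simp add: mat_def)
next
  case (Suc K)
  let ?M = "mat_pow P K"
  have P0: "\<forall>i j. 0 \<le> P$i$j" and P1: "\<forall>i. (\<Sum>j\<in>UNIV. P$i$j) = 1"
    using P unfolding random_walk_transition_def by auto
  have "0 \<le> (?M ** P) $ i $ j" for i j
    unfolding matrix_matrix_mult_def using Suc P0 by (auto intro!: sum_nonneg)
  moreover have "(\<Sum>j\<in>UNIV. (?M ** P) $ i $ j) = 1" for i
  proof -
    have "(\<Sum>j\<in>UNIV. (?M ** P) $ i $ j) = (\<Sum>j\<in>UNIV. \<Sum>k\<in>UNIV. ?M$i$k * P$k$j)"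
      unfolding matrix_matrix_mult_def by simp
    also have "\<dots> = (\<Sum>k\<in>UNIV. \<Sum>j\<in>UNIV. ?M$i$k * P$k$j)" by (rule sum.swap)
    also have "\<dots> = (\<Sum>k\<in>UNIV. ?M$i$k * (\<Sum>j\<in>UNIV. P$k$j))" by (simp add: sum_distrib_left)
    also have "\<dots> = 1" using P1 Suc by simp
    finally show ?thesis .
  qed
  ultimately show ?case by simp
qed

lemma linf_ge: "\<bar>y$k\<bar> \<le> linf_norm (y::real^'d)"
  unfolding linf_norm_def by (rule Max_ge) auto

lemma norm_le_linf:
  fixes y :: "real^'d"
  assumes "\<And>k. \<bar>y$k\<bar> \<le> m"
  shows "norm y \<le> sqrt (real CARD('d)) * m"
proof -
  have m0: "0 \<le> m" using assms[of undefined] by linarith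
  have "(\<Sum>k\<in>UNIV. (y$k)^2) \<le> (\<Sum>k\<in>(UNIV::'d set). m^2)"
  proof (rule sum_mono)
    fix k
    show "(y$k)^2 \<le> m^2" using power_mono[OF assms[of k] abs_ge_zero, of 2] by simp
  qed
  then have "sqrt (\<Sum>k\<in>UNIV. (y$k)^2) \<le> sqrt (real CARD('d) * m^2)"
    by (simp add: real_sqrt_le_mono)
  also have "\<dots> = sqrt (real CARD('d)) * m" using m0 by (simp add: real_sqrt_mult)
  finally show ?thesis unfolding norm_vec_def L2_set_def by simp
qed

lemma main_bound:
  fixes M :: "real^'n::finite^'n" and x :: "'n \<Rightarrow> real^'d"
  assumes M0: "\<And>i j. 0 \<le> M$i$j" and M1: "\<And>i. (\<Sum>j\<in>UNIV. M$i$j) = 1"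
    and Gn: "Gn = - Ga" and nea: "Ga \<noteq> {}" and nen: "Gn \<noteq> {}"
  shows "norm (mean_feat (sgcn_hidden M x) Ga - mean_feat (sgcn_hidden M x) Gn)
    \<le> \<bar>beta M Ga Ga - beta M Gn Ga\<bar> * norm (mean_feat x Ga - mean_feat x Gn)
       + 2 * sqrt (real CARD('d)) * max (dev x Ga) (dev x Gn)"
proof -
  define \<mu>a where "\<mu>a = mean_feat x Ga"
  define \<mu>n where "\<mu>n = mean_feat x Gn"
  define \<delta> where "\<delta> = max (dev x Ga) (dev x Gn)"
  define c where "c u = (if u \<in> Ga then \<mu>a else \<mu>n)" for u
  define e where "e u = x u - c u" for u
  define r where "r i = (\<Sum>u\<in>Ga. M$i$u)" for i
  define Ev where "Ev i = (\<Sum>u\<in>UNIV. M$i$u *\<^sub>R e u)" for i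
  define D where "D = \<mu>a - \<mu>n"
  have fin: "finite (S::'n set)" for S by simp
  have ebound: "\<bar>e u $ k\<bar> \<le> \<delta>" for u k
  proof (cases "u \<in> Ga")
    case True
    have "\<bar>e u $ k\<bar> \<le> linf_norm (x u - \<mu>a)" using True linf_ge[of "x u - \<mu>a" k] by (simp add: e_def c_def)
    also have "\<dots> \<le> dev x Ga" unfolding dev_def \<mu>a_def using True by (intro Max_ge) auto
    finally show ?thesis unfolding \<delta>_def by linarith
  next
    case False
    then have u: "u \<in> Gn" using Gn by auto
    have "\<bar>e u $ k\<bar> \<le> linf_norm (x u - \<mu>n)" using False linf_ge[of "x u - \<mu>n" k] by (simp add: e_def c_def)
    also have "\<dots> \<le> dev x Gn" unfolding dev_def \<mu>n_def using u by (intro Max_ge) auto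
    finally show ?thesis unfolding \<delta>_def by linarith
  qed
  have Evbound: "\<bar>Ev i $ k\<bar> \<le> \<delta>" for i k
  proof -
    have "\<bar>Ev i $ k\<bar> = \<bar>\<Sum>u\<in>UNIV. M$i$u * e u $ k\<bar>" by (simp add: Ev_def)
    also have "\<dots> \<le> (\<Sum>u\<in>UNIV. \<bar>M$i$u * e u $ k\<bar>)" by (rule sum_abs)
    also have "\<dots> \<le> (\<Sum>u\<in>UNIV. M$i$u * \<delta>)"
      apply (rule sum_mono) using M0 ebound by (simp add: abs_mult mult_left_mono)
    also have "\<dots> = \<delta>" using M1 by (simp add: sum_distrib_right[symmetric])
    finally show ?thesis .
  qed
  have hform: "sgcn_hidden M x i = \<mu>n + r i *\<^sub>R D + Ev i" for i
  proof -
    have "sgcn_hidden M x i = (\<Sum>u\<in>UNIV. M$i$u *\<^sub>R c u) + Ev i"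
      unfolding sgcn_hidden_def Ev_def e_def
      by (simp add: scaleR_diff_right sum.distrib[symmetric])
    also have "(\<Sum>u\<in>UNIV. M$i$u *\<^sub>R c u) = (\<Sum>u\<in>Ga. M$i$u *\<^sub>R \<mu>a) + (\<Sum>u\<in>Gn. M$i$u *\<^sub>R \<mu>n)"
    proof -
      have "(\<Sum>u\<in>UNIV. M$i$u *\<^sub>R c u) = (\<Sum>u\<in>UNIV \<inter> Ga. M$i$u *\<^sub>R c u) + (\<Sum>u\<in>UNIV - Ga. M$i$u *\<^sub>R c u)"
        by (rule sum.Int_Diff) simp
      also have "\<dots> = (\<Sum>u\<in>Ga. M$i$u *\<^sub>R \<mu>a) + (\<Sum>u\<in>Gn. M$i$u *\<^sub>R \<mu>n)"
        unfolding Gn Compl_eq_Diff_UNIV by (auto simp: c_def intro!: sum.cong)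
      finally show ?thesis .
    qed
    also have "(\<Sum>u\<in>Gn. M$i$u) = 1 - r i"
    proof -
      have "(\<Sum>u\<in>UNIV. M$i$u) = r i + (\<Sum>u\<in>Gn. M$i$u)"
        unfolding r_def Gn Compl_eq_Diff_UNIV using sum.Int_Diff[of UNIV "\<lambda>u. M$i$u" Ga] by simp
      then show ?thesis using M1[of i] by simp
    qed
    then have "(\<Sum>u\<in>Ga. M$i$u *\<^sub>R \<mu>a) + (\<Sum>u\<in>Gn. M$i$u *\<^sub>R \<mu>n) = r i *\<^sub>R \<mu>a + (1 - r i) *\<^sub>R \<mu>n"
      by (simp add: r_def scaleR_sum_left[symmetric])
    also have "\<dots> = \<mu>n + r i *\<^sub>R D" by (simp add: D_def algebra_simps)
    finally show ?thesis by simp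
  qed
  have meanform: "mean_feat (sgcn_hidden M x) G = \<mu>n + beta M G Ga *\<^sub>R D + mean_feat Ev G"
    if "G \<noteq> {}" for G
  proof -
    have cG: "real (card G) \<noteq> 0" using that by simp
    have "mean_feat (sgcn_hidden M x) G = (1 / real (card G)) *\<^sub>R
          (real (card G) *\<^sub>R \<mu>n + (\<Sum>i\<in>G. r i) *\<^sub>R D + (\<Sum>i\<in>G. Ev i))"
      unfolding mean_feat_def hform by (simp add: sum.distrib scaleR_sum_left sum_constant_scaleR del: sum_constant)
    also have "\<dots> = \<mu>n + beta M G Ga *\<^sub>R D + mean_feat Ev G"
      using cG unfolding beta_def mean_feat_def r_def by (simp add: scaleR_add_right)
    finally show ?thesis .
  qed
  have mEbound: "\<bar>mean_feat Ev G $ k\<bar> \<le> \<delta>" if "G \<noteq> {}" for G k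
  proof -
    have cG: "real (card G) > 0" using that by (simp add: card_gt_0_iff)
    have "\<bar>\<Sum>i\<in>G. Ev i $ k\<bar> \<le> (\<Sum>i\<in>G. \<delta>)"
      by (rule order_trans[OF sum_abs sum_mono]) (rule Evbound)
    then have "\<bar>\<Sum>i\<in>G. Ev i $ k\<bar> \<le> real (card G) * \<delta>" by simp
    then show ?thesis unfolding mean_feat_def using cG
      by (simp add: sum_component abs_divide divide_le_eq mult.commute)
  qed
  have diff: "mean_feat (sgcn_hidden M x) Ga - mean_feat (sgcn_hidden M x) Gn
     = (beta M Ga Ga - beta M Gn Ga) *\<^sub>R D + (mean_feat Ev Ga - mean_feat Ev Gn)"
    using meanform[OF nea] meanform[OF nen] by (simp add: algebra_simps)
  have "norm (mean_feat Ev Ga - mean_feat Ev Gn) \<le> sqrt (real CARD('d)) * (2 * \<delta>)"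
  proof (rule norm_le_linf)
    fix k
    show "\<bar>(mean_feat Ev Ga - mean_feat Ev Gn) $ k\<bar> \<le> 2 * \<delta>"
      using mEbound[OF nea, of k] mEbound[OF nen, of k] by simp
  qed
  then show ?thesis unfolding diff \<delta>_def[symmetric] \<mu>a_def[symmetric] \<mu>n_def[symmetric] D_def[symmetric]
    using norm_triangle_ineq[of "(beta M Ga Ga - beta M Gn Ga) *\<^sub>R D"
        "mean_feat Ev Ga - mean_feat Ev Gn"]
    by (simp add: mult_ac)
qed

theorem theorem1:
  fixes E :: "'n::finite \<Rightarrow> 'n \<Rightarrow> bool"
    and P :: "real^'n^'n"
    and K :: nat
    and x :: "'n \<Rightarrow> real^'d"
    and s :: "'n \<Rightarrow> 'a"
    and A :: "'a set"
    and W :: "real^'c^'d"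
  assumes P: "random_walk_transition E P"
    and finA: "finite A"
    and sA: "\<And>v. s v \<in> A"
    and ne: "\<And>a. a \<in> A \<Longrightarrow> grp s a \<noteq> {}"
    and ne': "\<And>a. a \<in> A \<Longrightarrow> grp_not s a \<noteq> {}"
  shows "L_dp (mat_pow P K) x W s A
    \<le> (\<Sum>a\<in>A. spectral_norm W *
          (\<bar>beta (mat_pow P K) (grp s a) (grp s a) - beta (mat_pow P K) (grp_not s a) (grp s a)\<bar>
             * norm (mean_feat x (grp s a) - mean_feat x (grp_not s a))
           + 2 * sqrt (real CARD('d)) * (\<Sum>a'\<in>A. delta x s a')))"
proof -
  define M where "M = mat_pow P K"
  have M0: "\<And>i j. 0 \<le> M$i$j" and M1: "\<And>i. (\<Sum>j\<in>UNIV. M$i$j) = 1"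
    using stoch_pow[OF P, of K] unfolding M_def by auto
  define T where "T = (\<lambda>y. transpose W *v y)"
  have bl: "bounded_linear T" unfolding T_def by simp
  interpret T: bounded_linear T by (rule bl)
  have sn: "spectral_norm W = onorm T"
  proof -
    have "(\<lambda>y. y v* W) = T" by (rule ext) (simp add: T_def)
    then show ?thesis unfolding spectral_norm_def by simp
  qed
  have sn0: "0 \<le> spectral_norm W" using onorm_pos_le[OF bl] sn by simp
  have lin_mean: "(1 / real (card G)) *\<^sub>R (\<Sum>v\<in>G. sgcn_logit M x W v) = T (mean_feat (sgcn_hidden M x) G)" for G
    unfolding mean_feat_def sgcn_logit_def T.scaleR T.sum by (simp add: T_def)
  have dpos: "0 \<le> delta x s a" if aA: "a \<in> A" for a
  proof -
    obtain v where v: "v \<in> grp s a" using ne[OF aA] by blast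
    have "0 \<le> linf_norm (x v - mean_feat x (grp s a))"
      using linf_ge[of _ undefined] abs_ge_zero order_trans by blast
    also have "\<dots> \<le> dev x (grp s a)" unfolding dev_def using v by (intro Max_ge) auto
    finally show ?thesis unfolding delta_def by linarith
  qed
  show ?thesis
    unfolding L_dp_def M_def[symmetric]
  proof (rule sum_mono)
    fix a assume a: "a \<in> A"
    have Gn: "grp_not s a = - grp s a" unfolding grp_def grp_not_def by auto
    have mb: "norm (mean_feat (sgcn_hidden M x) (grp s a) - mean_feat (sgcn_hidden M x) (grp_not s a))
      \<le> \<bar>beta M (grp s a) (grp s a) - beta M (grp_not s a) (grp s a)\<bar> * norm (mean_feat x (grp s a) - mean_feat x (grp_not s a))
       + 2 * sqrt (real CARD('d)) * delta x s a"
      unfolding delta_def by (rule main_bound[OF M0 M1 Gn ne[OF a] ne'[OF a]])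
    have "delta x s a \<le> (\<Sum>a'\<in>A. delta x s a')"
      by (rule member_le_sum[of a A "delta x s"]) (use a dpos finA in auto)
    then have mb2: "norm (mean_feat (sgcn_hidden M x) (grp s a) - mean_feat (sgcn_hidden M x) (grp_not s a))
      \<le> \<bar>beta M (grp s a) (grp s a) - beta M (grp_not s a) (grp s a)\<bar> * norm (mean_feat x (grp s a) - mean_feat x (grp_not s a))
       + 2 * sqrt (real CARD('d)) * (\<Sum>a'\<in>A. delta x s a')"
      using mb by (smt (verit) mult_left_mono real_sqrt_ge_zero of_nat_0_le_iff)
    have "norm ((1 / real (card (grp s a))) *\<^sub>R (\<Sum>v\<in>grp s a. sgcn_logit M x W v)
          - (1 / real (card (grp_not s a))) *\<^sub>R (\<Sum>v\<in>grp_not s a. sgcn_logit M x W v))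
        = norm (T (mean_feat (sgcn_hidden M x) (grp s a) - mean_feat (sgcn_hidden M x) (grp_not s a)))"
      by (simp add: lin_mean T.diff)
    also have "\<dots> \<le> spectral_norm W * norm (mean_feat (sgcn_hidden M x) (grp s a) - mean_feat (sgcn_hidden M x) (grp_not s a))"
      unfolding sn by (rule onorm[OF bl])
    also have "\<dots> \<le> spectral_norm W * (\<bar>beta M (grp s a) (grp s a) - beta M (grp_not s a) (grp s a)\<bar> * norm (mean_feat x (grp s a) - mean_feat x (grp_not s a))
       + 2 * sqrt (real CARD('d)) * (\<Sum>a'\<in>A. delta x s a'))"
      by (rule mult_left_mono[OF mb2 sn0])
    finally show "norm ((1 / real (card (grp s a))) *\<^sub>R (\<Sum>v\<in>grp s a. sgcn_logit M x W v)
          - (1 / real (card (grp_not s a))) *\<^sub>R (\<Sum>v\<in>grp_not s a. sgcn_logit M x W v))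
        \<le> spectral_norm W * (\<bar>beta M (grp s a) (grp s a) - beta M (grp_not s a) (grp s a)\<bar> * norm (mean_feat x (grp s a) - mean_feat x (grp_not s a))
       + 2 * sqrt (real CARD('d)) * (\<Sum>a'\<in>A. delta x s a'))" .
  qed
qed

end
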